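(* Let $V$ be a vector space over $\mathbb{F}_q$ with $q$ odd and a perfect square, and let $s_1,\dots,s_5$ be transvections in $\mathrm{SL}(V)$ such that $(s_1,s_2)$ and $(s_2,s_3)$ are two-way directed edges and $[s_3,s_4]$, $[s_4,s_5]$, $[s_5,s_3]$ are directed edges of $\Gamma(\mathcal T)$. Assume that $(s_1,s_3)$ is not a two-way directed edge. If $[s_1,s_3]$ is a one-way edge, then the triangle $(s_1,s_3,s_2)$ is non-unitary. If $[s_3,s_1]$ is a one-way edge, then the triangle $(s_1,s_2,s_3)$ is non-unitary. If neither $[s_1,s_3]$ nor $[s_3,s_1]$ is an edge, then $(s_1,s_3^{s_2})$ is a two-way directed edge and $[s_3^{s_2},s_4^{s_2}]$, $[s_4^{s_2},s_5^{s_2}]$, $[s_5^{s_2},s_3^{s_2}]$ are directed edges.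
   Context: Transvections $s=1+u_s\otimes\phi_s$, i.e. $x\mapsto x+\phi_s(x)u_s$ with $\phi_s(u_s)=0$; $\mathcal T$ is the set of all transvections of $\mathrm{SL}(V)$. $\Gamma(\mathcal T)$: directed graph with an edge $[s,t]$ iff $\phi_t(u_s)\ne0$; it is two-way if $[t,s]$ is also an edge, one-way otherwise. $s^g=g^{-1}sg$. Weight $w(r_1,\dots,r_k)=\prod_{i=1}^k\phi_{r_{i+1}}(u_{r_i})$ (indices mod $k$); the tuple is unitary if $w(r_1,\dots,r_k)+(-1)^{k+1}w(r_k,\dots,r_1)^{\sqrt q}=0$, non-unitary otherwise. *)

theory Defs
  imports Main
begin

text \<open>V = 'n \<Rightarrow> 'a, a finite-dimensional vector space over the field 'a (coordinates
indexed by the finite type 'n). Linear functionals are given by coefficient vectors.\<close>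

definition pair :: "('n::finite \<Rightarrow> 'a::field) \<Rightarrow> ('n \<Rightarrow> 'a) \<Rightarrow> 'a" where
  "pair f x = (\<Sum>i\<in>UNIV. f i * x i)"

definition tv :: "('n::finite \<Rightarrow> 'a::field) \<Rightarrow> ('n \<Rightarrow> 'a) \<Rightarrow> ('n \<Rightarrow> 'a) \<Rightarrow> ('n \<Rightarrow> 'a)" where
  "tv u f = (\<lambda>x i. x i + pair f x * u i)"

definition rep :: "(('n::finite \<Rightarrow> 'a::field) \<Rightarrow> ('n \<Rightarrow> 'a)) \<Rightarrow> ('n \<Rightarrow> 'a) \<Rightarrow> ('n \<Rightarrow> 'a) \<Rightarrow> bool" where
  "rep s u f \<longleftrightarrow> u \<noteq> (\<lambda>_. 0) \<and> f \<noteq> (\<lambda>_. 0) \<and> pair f u = 0 \<and> s = tv u f"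

definition transvection :: "(('n::finite \<Rightarrow> 'a::field) \<Rightarrow> ('n \<Rightarrow> 'a)) \<Rightarrow> bool" where
  "transvection s \<longleftrightarrow> (\<exists>u f. rep s u f)"

definition edge :: "(('n::finite \<Rightarrow> 'a::field) \<Rightarrow> ('n \<Rightarrow> 'a)) \<Rightarrow> (('n \<Rightarrow> 'a) \<Rightarrow> ('n \<Rightarrow> 'a)) \<Rightarrow> bool" where
  "edge s t \<longleftrightarrow> (\<exists>us fs ut ft. rep s us fs \<and> rep t ut ft \<and> pair ft us \<noteq> 0)"

definition two_way :: "(('n::finite \<Rightarrow> 'a::field) \<Rightarrow> ('n \<Rightarrow> 'a)) \<Rightarrow> (('n \<Rightarrow> 'a) \<Rightarrow> ('n \<Rightarrow> 'a)) \<Rightarrow> bool" where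
  "two_way s t \<longleftrightarrow> edge s t \<and> edge t s"

definition one_way :: "(('n::finite \<Rightarrow> 'a::field) \<Rightarrow> ('n \<Rightarrow> 'a)) \<Rightarrow> (('n \<Rightarrow> 'a) \<Rightarrow> ('n \<Rightarrow> 'a)) \<Rightarrow> bool" where
  "one_way s t \<longleftrightarrow> edge s t \<and> \<not> edge t s"

definition conj :: "(('n::finite \<Rightarrow> 'a::field) \<Rightarrow> ('n \<Rightarrow> 'a)) \<Rightarrow> (('n \<Rightarrow> 'a) \<Rightarrow> ('n \<Rightarrow> 'a)) \<Rightarrow> (('n \<Rightarrow> 'a) \<Rightarrow> ('n \<Rightarrow> 'a))" where
  "conj s g = inv g \<circ> s \<circ> g"

definition weight :: "(('n::finite \<Rightarrow> 'a::field) \<times> ('n \<Rightarrow> 'a)) list \<Rightarrow> 'a" where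
  "weight rs = (\<Prod>i<length rs. pair (snd (rs ! ((i + 1) mod length rs))) (fst (rs ! i)))"

text \<open>Unitary tuple, with sq = sqrt q (the Frobenius exponent).
  The weight does not depend on the chosen representatives.\<close>
definition unitary :: "nat \<Rightarrow> (('n::finite \<Rightarrow> 'a::field) \<Rightarrow> ('n \<Rightarrow> 'a)) list \<Rightarrow> bool" where
  "unitary sq ss \<longleftrightarrow> (\<exists>rs. length rs = length ss \<and>
      (\<forall>i<length ss. rep (ss ! i) (fst (rs ! i)) (snd (rs ! i))) \<and>
      weight rs + (-1) ^ (length ss + 1) * (weight (rev rs)) ^ sq = 0)"

end

theory Submission
  imports Defs
begin

lemma pair_lin: "pair g (\<lambda>i. x i + c * u i) = pair g x + c * pair g u"
  by (simp add: pair_def distrib_left sum.distrib sum_distrib_left algebra_simps)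

lemma pair_lin_left: "pair (\<lambda>i. f i + c * g i) x = pair f x + c * pair g x"
  by (simp add: pair_def distrib_right sum.distrib sum_distrib_left algebra_simps)

lemma pair_scale: "pair g (\<lambda>i. c * u i) = c * pair g u"
  by (simp add: pair_def sum_distrib_left algebra_simps)

lemma pair_tv: "pair g (tv u f x) = pair g x + pair f x * pair g u"
  unfolding tv_def by (rule pair_lin)

lemma pair_delta: "pair f (\<lambda>j. if j = i then 1 else 0) = f i"
  by (simp add: pair_def if_distrib cong: if_cong)

lemma rep_unique:
  assumes "rep s u f" "rep s u' f'"
  shows "\<exists>c. c \<noteq> 0 \<and> u' = (\<lambda>i. c * u i) \<and> (\<forall>x. pair f x = c * pair f' x)"
proof -
  have eq: "\<And>x i. pair f x * u i = pair f' x * u' i"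
  proof -
    fix x i
    have "tv u f x i = tv u' f' x i" using assms by (simp add: rep_def)
    then show "pair f x * u i = pair f' x * u' i" by (simp add: tv_def)
  qed
  obtain i0 where i0: "f i0 \<noteq> 0" using assms(1) by (auto simp: rep_def)
  define x0 where "x0 = (\<lambda>j. if j = i0 then (1::'b) else 0)"
  have a: "pair f x0 \<noteq> 0" using i0 by (simp add: x0_def pair_delta)
  obtain k where k: "u k \<noteq> 0" using assms(1) by (auto simp: rep_def)
  have b: "pair f' x0 \<noteq> 0" using eq[of x0 k] a k by auto
  define c where "c = pair f x0 / pair f' x0"
  have c0: "c \<noteq> 0" using a b by (simp add: c_def)
  have u': "u' = (\<lambda>i. c * u i)"
  proof
    fix i show "u' i = c * u i" using eq[of x0 i] b by (simp add: c_def field_simps)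
  qed
  have "\<forall>x. pair f x = c * pair f' x"
  proof
    fix x
    have "pair f x * u k = pair f' x * (c * u k)" using eq[of x k] u' by simp
    then show "pair f x = c * pair f' x" using k by (simp add: algebra_simps)
  qed
  then show ?thesis using c0 u' by blast
qed

lemma edge_iff:
  assumes "rep s us fs" "rep t ut ft"
  shows "edge s t \<longleftrightarrow> pair ft us \<noteq> 0"
proof
  assume "edge s t"
  then obtain us' fs' ut' ft' where r: "rep s us' fs'" "rep t ut' ft'" "pair ft' us' \<noteq> 0"
    unfolding edge_def by blast
  obtain c where c: "c \<noteq> 0" "us' = (\<lambda>i. c * us i)" using rep_unique[OF assms(1) r(1)] by blast
  obtain d where d: "d \<noteq> 0" "\<forall>x. pair ft x = d * pair ft' x" using rep_unique[OF assms(2) r(2)] by blast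
  have "pair ft' us' = c * pair ft' us" using c by (simp add: pair_scale)
  then have "pair ft' us \<noteq> 0" using r(3) by auto
  then show "pair ft us \<noteq> 0" using d by simp
next
  assume "pair ft us \<noteq> 0" then show "edge s t" using assms unfolding edge_def by blast
qed

lemma pair_neg: "pair g (\<lambda>i. - u i) = - pair g u"
  by (simp add: pair_def sum_negf)

lemma weight3: "weight [a, b, c] = pair (snd b) (fst a) * pair (snd c) (fst b) * pair (snd a) (fst c)"
proof -
  have e: "{..<length [a,b,c]} = {0,1,2}" by auto
  show ?thesis unfolding weight_def e by (simp add: mult_ac)
qed

lemma tv_inv_pt:
  assumes "pair f u = 0"
  shows "tv u f (tv (\<lambda>i. - u i) f x) = x" "tv (\<lambda>i. - u i) f (tv u f x) = x"
proof -
  have a: "pair f (tv (\<lambda>i. - u i) f x) = pair f x" using assms by (simp add: pair_tv pair_neg)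
  have b: "pair f (tv u f x) = pair f x" using assms by (simp add: pair_tv)
  show "tv u f (tv (\<lambda>i. - u i) f x) = x"
    by (rule ext) (simp only: tv_def[of u f] a, simp add: tv_def)
  show "tv (\<lambda>i. - u i) f (tv u f x) = x"
    by (rule ext) (simp only: tv_def[of "\<lambda>i. - u i" f] b, simp add: tv_def)
qed

lemma inv_tv:
  assumes "pair f u = 0"
  shows "inv (tv u f) = tv (\<lambda>i. - u i) f"
  by (rule inv_unique_comp) (auto simp: fun_eq_iff tv_inv_pt[OF assms])

lemma conj_rep:
  assumes r2: "rep g u2 f2" and r: "rep s u f"
  shows "rep (conj s g) (\<lambda>i. u i - pair f2 u * u2 i) (\<lambda>i. f i + pair f u2 * f2 i)"
proof -
  have p22: "pair f2 u2 = 0" and puf: "pair f u = 0" using r2 r by (auto simp: rep_def)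
  have g: "g = tv u2 f2" and sdef: "s = tv u f" using r2 r by (auto simp: rep_def)
  have pf': "\<And>x. pair (\<lambda>i. f i + pair f u2 * f2 i) x = pair f (tv u2 f2 x)"
    by (simp add: pair_lin_left pair_tv)
  have u'eq: "(\<lambda>i. u i - pair f2 u * u2 i) = tv (\<lambda>i. - u2 i) f2 u"
    by (simp add: tv_def fun_eq_iff)
  have cg: "conj s g = tv (\<lambda>i. u i - pair f2 u * u2 i) (\<lambda>i. f i + pair f u2 * f2 i)"
  proof (intro ext)
    fix x i
    have "conj s g x i = tv (\<lambda>i. - u2 i) f2 (tv u f (tv u2 f2 x)) i"
      using p22 by (simp add: conj_def g sdef inv_tv)
    also have "\<dots> = tv (\<lambda>i. u i - pair f2 u * u2 i) (\<lambda>i. f i + pair f u2 * f2 i) x i"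
    proof -
      define y where "y = tv u2 f2 x"
      define z where "z = tv u f y"
      have pz: "pair f2 z = pair f2 x + pair f y * pair f2 u"
        using p22 by (simp add: pair_tv z_def y_def)
      have zi: "z i = x i + pair f2 x * u2 i + pair f y * u i"
        by (simp add: z_def y_def tv_def)
      have "tv (\<lambda>i. - u2 i) f2 z i = z i + pair f2 z * - u2 i" by (simp add: tv_def)
      also have "\<dots> = x i + pair f y * (u i - pair f2 u * u2 i)"
        unfolding pz zi by (simp add: algebra_simps)
      also have "\<dots> = tv (\<lambda>i. u i - pair f2 u * u2 i) (\<lambda>i. f i + pair f u2 * f2 i) x i"
        by (simp add: tv_def pf' y_def)
      finally show ?thesis by (simp add: z_def y_def)
    qed
    finally show "conj s g x i = tv (\<lambda>i. u i - pair f2 u * u2 i) (\<lambda>i. f i + pair f u2 * f2 i) x i" .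
  qed
  have pu': "pair (\<lambda>i. f i + pair f u2 * f2 i) (\<lambda>i. u i - pair f2 u * u2 i) = 0"
    unfolding pf' u'eq tv_inv_pt[OF p22] using puf .
  have un: "(\<lambda>i. u i - pair f2 u * u2 i) \<noteq> (\<lambda>_. 0)"
  proof
    assume "(\<lambda>i. u i - pair f2 u * u2 i) = (\<lambda>_. 0)"
    then have "tv u2 f2 (\<lambda>_. 0) = u" using u'eq tv_inv_pt[OF p22] by metis
    moreover have "tv u2 f2 (\<lambda>_. 0) = (\<lambda>_. 0)" by (simp add: tv_def pair_def)
    ultimately show False using r by (simp add: rep_def)
  qed
  have fn: "(\<lambda>i. f i + pair f u2 * f2 i) \<noteq> (\<lambda>_. 0)"
  proof
    assume h: "(\<lambda>i. f i + pair f u2 * f2 i) = (\<lambda>_. 0)"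
    obtain i0 where i0: "f i0 \<noteq> 0" using r by (auto simp: rep_def)
    define y where "y = (\<lambda>j. if j = i0 then (1::'b) else 0)"
    have "pair f (tv u2 f2 (tv (\<lambda>i. - u2 i) f2 y)) = 0"
    proof -
      have "pair f (tv u2 f2 (tv (\<lambda>i. - u2 i) f2 y)) = pair (\<lambda>_. 0) (tv (\<lambda>i. - u2 i) f2 y)"
        using pf'[of "tv (\<lambda>i. - u2 i) f2 y", unfolded h] by simp
      then show ?thesis by (simp add: pair_def)
    qed
    then have "pair f y = 0" by (simp only: tv_inv_pt[OF p22])
    then show False using i0 by (simp add: y_def pair_delta)
  qed
  show ?thesis using cg pu' un fn by (simp add: rep_def)
qed

lemma pair_sub: "pair g (\<lambda>i. x i - c * u i) = pair g x - c * pair g u"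
  by (simp add: pair_def sum_subtractf sum_distrib_left algebra_simps)

lemma conj_pair:
  assumes r2: "rep g u2 f2" and "pair f2 u2 = 0"
  shows "pair (\<lambda>i. ft i + pair ft u2 * f2 i) (\<lambda>i. us i - pair f2 us * u2 i) = pair ft us"
proof -
  have pf': "\<And>x. pair (\<lambda>i. ft i + pair ft u2 * f2 i) x = pair ft (tv u2 f2 x)"
    by (simp add: pair_lin_left pair_tv)
  have u'eq: "(\<lambda>i. us i - pair f2 us * u2 i) = tv (\<lambda>i. - u2 i) f2 us"
    by (simp add: tv_def fun_eq_iff)
  show ?thesis unfolding pf' u'eq tv_inv_pt[OF assms(2)] ..
qed

lemma conj_edge:
  assumes r2: "rep g u2 f2" and rs: "rep s us fs" and rt: "rep t ut ft"
  shows "edge (conj s g) (conj t g) \<longleftrightarrow> edge s t"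
proof -
  have p22: "pair f2 u2 = 0" using r2 by (simp add: rep_def)
  show ?thesis
    using edge_iff[OF conj_rep[OF r2 rs] conj_rep[OF r2 rt]] edge_iff[OF rs rt]
      conj_pair[OF r2 p22, of ft us] by simp
qed

lemma len3: "length xs = 3 \<Longrightarrow> \<exists>a b c. xs = [a, b, c]"
proof -
  assume "length xs = 3"
  then have "length xs = Suc (Suc (Suc 0))" by simp
  then show ?thesis by (auto simp: length_Suc_conv)
qed

lemma nonunit3:
  assumes "edge x y" "edge y z" "edge z x" "\<not> (edge y x \<and> edge z y \<and> edge x z)" "sq > 0"
  shows "\<not> unitary sq [x, y, z]"
proof
  assume "unitary sq [x, y, z]"
  then obtain rs where A: "length rs = length [x, y, z]"
    "\<forall>i<length [x, y, z]. rep ([x, y, z] ! i) (fst (rs ! i)) (snd (rs ! i))"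
    "weight rs + (-1) ^ (length [x, y, z] + 1) * (weight (rev rs)) ^ sq = 0"
    unfolding unitary_def by blast
  have l3: "length [x, y, z] = 3" by simp
  have len: "length rs = 3" using A(1) l3 by simp
  have l4: "length [x, y, z] + 1 = 4" by simp
  have m1: "(-1::'b) ^ 4 = 1" by simp
  have eq: "weight rs + (weight (rev rs)) ^ sq = 0" using A(3) unfolding l4 m1 by simp
  have reps: "\<And>i. i < 3 \<Longrightarrow> rep ([x, y, z] ! i) (fst (rs ! i)) (snd (rs ! i))" using A(2) unfolding l3 by blast
  obtain a b c where rsd: "rs = [a, b, c]" using len
    using len3[OF len] by blast
  have ra: "rep x (fst a) (snd a)" using reps[of 0] by (simp add: rsd)
  have rb: "rep y (fst b) (snd b)" using reps[of 1] by (simp add: rsd)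
  have rc: "rep z (fst c) (snd c)" using reps[of 2] by (simp add: rsd)
  have w: "weight rs \<noteq> 0"
    using edge_iff[OF ra rb] edge_iff[OF rb rc] edge_iff[OF rc ra] assms(1-3)
    by (simp add: rsd weight3)
  have wr: "weight (rev rs) = 0"
    using edge_iff[OF rb ra] edge_iff[OF rc rb] edge_iff[OF ra rc] assms(4)
    by (auto simp: rsd weight3)
  have z: "weight (rev rs) ^ sq = 0" using wr assms(5) by simp
  have "weight rs = 0" using eq unfolding z by simp
  then show False using w by simp
qed

theorem lemma4p10:
  fixes s1 s2 s3 s4 s5 :: "('n::finite \<Rightarrow> 'a::field) \<Rightarrow> ('n \<Rightarrow> 'a)"
    and q sq :: nat
  assumes fin: "finite (UNIV :: 'a set)" and card: "card (UNIV :: 'a set) = q"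
    and odd: "odd q" and sq: "sq ^ 2 = q"
    and t1: "transvection s1" and t2: "transvection s2" and t3: "transvection s3"
    and t4: "transvection s4" and t5: "transvection s5"
    and e12: "two_way s1 s2" and e23: "two_way s2 s3"
    and e34: "edge s3 s4" and e45: "edge s4 s5" and e53: "edge s5 s3"
    and n13: "\<not> two_way s1 s3"
  shows "(one_way s1 s3 \<longrightarrow> \<not> unitary sq [s1, s3, s2])
       \<and> (one_way s3 s1 \<longrightarrow> \<not> unitary sq [s1, s2, s3])
       \<and> (\<not> edge s1 s3 \<and> \<not> edge s3 s1 \<longrightarrow>
            two_way s1 (conj s3 s2)
            \<and> edge (conj s3 s2) (conj s4 s2)
            \<and> edge (conj s4 s2) (conj s5 s2)
            \<and> edge (conj s5 s2) (conj s3 s2))"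
proof -
  have sqp: "sq > 0" using sq odd by (cases sq) auto
  obtain u1 f1 where r1: "rep s1 u1 f1" using t1 unfolding transvection_def by blast
  obtain u2 f2 where r2: "rep s2 u2 f2" using t2 unfolding transvection_def by blast
  obtain u3 f3 where r3: "rep s3 u3 f3" using t3 unfolding transvection_def by blast
  obtain u4 f4 where r4: "rep s4 u4 f4" using t4 unfolding transvection_def by blast
  obtain u5 f5 where r5: "rep s5 u5 f5" using t5 unfolding transvection_def by blast
  have P1: "one_way s1 s3 \<longrightarrow> \<not> unitary sq [s1, s3, s2]"
    using nonunit3[of s1 s3 s2 sq] e12 e23 sqp unfolding one_way_def two_way_def by blast
  have P2: "one_way s3 s1 \<longrightarrow> \<not> unitary sq [s1, s2, s3]"
    using nonunit3[of s1 s2 s3 sq] e12 e23 sqp unfolding one_way_def two_way_def by blast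
  have P3: "\<not> edge s1 s3 \<and> \<not> edge s3 s1 \<longrightarrow>
            two_way s1 (conj s3 s2)
            \<and> edge (conj s3 s2) (conj s4 s2)
            \<and> edge (conj s4 s2) (conj s5 s2)
            \<and> edge (conj s5 s2) (conj s3 s2)"
  proof
    assume h: "\<not> edge s1 s3 \<and> \<not> edge s3 s1"
    have a13: "pair f3 u1 = 0" using h edge_iff[OF r1 r3] by simp
    have a31: "pair f1 u3 = 0" using h edge_iff[OF r3 r1] by simp
    have a12: "pair f2 u1 \<noteq> 0" using e12 edge_iff[OF r1 r2] by (simp add: two_way_def)
    have a21: "pair f1 u2 \<noteq> 0" using e12 edge_iff[OF r2 r1] by (simp add: two_way_def)
    have a23: "pair f3 u2 \<noteq> 0" using e23 edge_iff[OF r2 r3] by (simp add: two_way_def)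
    have a32: "pair f2 u3 \<noteq> 0" using e23 edge_iff[OF r3 r2] by (simp add: two_way_def)
    have r3': "rep (conj s3 s2) (\<lambda>i. u3 i - pair f2 u3 * u2 i) (\<lambda>i. f3 i + pair f3 u2 * f2 i)"
      by (rule conj_rep[OF r2 r3])
    have "edge s1 (conj s3 s2)"
      using edge_iff[OF r1 r3'] a13 a12 a23 by (simp add: pair_lin_left)
    moreover have "edge (conj s3 s2) s1"
      using edge_iff[OF r3' r1] a31 a21 a32 by (simp add: pair_sub)
    moreover have "edge (conj s3 s2) (conj s4 s2)" using conj_edge[OF r2 r3 r4] e34 by simp
    moreover have "edge (conj s4 s2) (conj s5 s2)" using conj_edge[OF r2 r4 r5] e45 by simp
    moreover have "edge (conj s5 s2) (conj s3 s2)" using conj_edge[OF r2 r5 r3] e53 by simp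
    ultimately show "two_way s1 (conj s3 s2)
            \<and> edge (conj s3 s2) (conj s4 s2)
            \<and> edge (conj s4 s2) (conj s5 s2)
            \<and> edge (conj s5 s2) (conj s3 s2)" by (simp add: two_way_def)
  qed
  show ?thesis using P1 P2 P3 by blast
qed

end
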